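(* Let $A, C, D$ be binary random variables, with $A$ taking values $a,\overline{a}$, $C$ taking values $c,\overline{c}$, $D$ taking values $d,\overline{d}$, and let $Y$ be a real random variable with finite expectation. Suppose the joint distribution factorizes as \[ p(A,C,D,Y)=p(D)\,p(C\mid D)\,p(A\mid C)\,p(Y\mid A,C). \] Assume that $C$ and $D$ are dependent, and that every event $\{A=x, C=y, D=z\}$ has positive probability. If $E[Y\mid A,D]$ is monotone in $D$, then $RD_{obs}$ lies between $RD_{true}$ and $RD_{crude}$.
   Context: $RD_{true}=E[Y|a,c]p(c)+E[Y|a,\overline{c}]p(\overline{c})-E[Y|\overline{a},c]p(c)-E[Y|\overline{a},\overline{c}]p(\overline{c})$; $RD_{crude}=E[Y|a]-E[Y|\overline{a}]$; $RD_{obs}=E[Y|a,d]p(d)+E[Y|a,\overline{d}]p(\overline{d})-E[Y|\overline{a},d]p(d)-E[Y|\overline{a},\overline{d}]p(\overline{d})$. $E[Y\mid A,D]$ is nondecreasing in $D$ if $E[Y\mid a,d]\ge E[Y\mid a,\overline{d}]$ and $E[Y\mid \overline{a},d]\ge E[Y\mid \overline{a},\overline{d}]$; nonincreasing if both inequalities are reversed; monotone if it is either. *)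

theory Defs
  imports "HOL-Probability.Probability"
begin

text \<open>Binary random variables are modelled as bool-valued maps: True stands for a (resp. c, d),
False for the complement value.\<close>

definition ev :: "'a measure \<Rightarrow> ('a \<Rightarrow> bool) \<Rightarrow> 'a set" where
  "ev M P = {w \<in> space M. P w}"

definition pr :: "'a measure \<Rightarrow> ('a \<Rightarrow> bool) \<Rightarrow> real" where
  "pr M P = measure M (ev M P)"

definition cexp :: "'a measure \<Rightarrow> ('a \<Rightarrow> real) \<Rightarrow> ('a \<Rightarrow> bool) \<Rightarrow> real" where
  "cexp M Y P = (\<integral>w. indicator (ev M P) w * Y w \<partial>M) / pr M P"

text \<open>Adjusted risk difference standardising over the binary variable Z (used for RD_true with Z = C
and RD_obs with Z = D).\<close>
definition RD_adj :: "'a measure \<Rightarrow> ('a \<Rightarrow> real) \<Rightarrow> ('a \<Rightarrow> bool) \<Rightarrow> ('a \<Rightarrow> bool) \<Rightarrow> real" where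
  "RD_adj M Y A Z =
     cexp M Y (\<lambda>w. A w \<and> Z w) * pr M Z
   + cexp M Y (\<lambda>w. A w \<and> \<not> Z w) * pr M (\<lambda>w. \<not> Z w)
   - cexp M Y (\<lambda>w. \<not> A w \<and> Z w) * pr M Z
   - cexp M Y (\<lambda>w. \<not> A w \<and> \<not> Z w) * pr M (\<lambda>w. \<not> Z w)"

definition RD_crude :: "'a measure \<Rightarrow> ('a \<Rightarrow> real) \<Rightarrow> ('a \<Rightarrow> bool) \<Rightarrow> real" where
  "RD_crude M Y A = cexp M Y A - cexp M Y (\<lambda>w. \<not> A w)"

definition nondecr_in :: "'a measure \<Rightarrow> ('a \<Rightarrow> real) \<Rightarrow> ('a \<Rightarrow> bool) \<Rightarrow> ('a \<Rightarrow> bool) \<Rightarrow> bool" where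
  "nondecr_in M Y A D \<longleftrightarrow>
     cexp M Y (\<lambda>w. A w \<and> D w) \<ge> cexp M Y (\<lambda>w. A w \<and> \<not> D w) \<and>
     cexp M Y (\<lambda>w. \<not> A w \<and> D w) \<ge> cexp M Y (\<lambda>w. \<not> A w \<and> \<not> D w)"

definition nonincr_in :: "'a measure \<Rightarrow> ('a \<Rightarrow> real) \<Rightarrow> ('a \<Rightarrow> bool) \<Rightarrow> ('a \<Rightarrow> bool) \<Rightarrow> bool" where
  "nonincr_in M Y A D \<longleftrightarrow>
     cexp M Y (\<lambda>w. A w \<and> D w) \<le> cexp M Y (\<lambda>w. A w \<and> \<not> D w) \<and>
     cexp M Y (\<lambda>w. \<not> A w \<and> D w) \<le> cexp M Y (\<lambda>w. \<not> A w \<and> \<not> D w)"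

definition monotone_in :: "'a measure \<Rightarrow> ('a \<Rightarrow> real) \<Rightarrow> ('a \<Rightarrow> bool) \<Rightarrow> ('a \<Rightarrow> bool) \<Rightarrow> bool" where
  "monotone_in M Y A D \<longleftrightarrow> nondecr_in M Y A D \<or> nonincr_in M Y A D"

end

theory Submission
  imports Defs
begin


lemma den_pos:
  fixes r1 r0 x :: real
  assumes "r1 > 0" "r0 > 0" "0 \<le> x" "x \<le> 1"
  shows "x*r1 + (1-x)*r0 > 0"
proof (cases "x = 0")
  case True then show ?thesis using assms by simp
next
  case False then have "x*r1 > 0" using assms by simp
  moreover have "(1-x)*r0 \<ge> 0" using assms by simp
  ultimately show ?thesis by linarith
qed

lemma jensen2:
  fixes r1 r0 \<delta> p1 p0 :: real
  assumes r: "r1 > 0" "r0 > 0" and d: "0 \<le> \<delta>" "\<delta> \<le> 1"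
    and p: "0 \<le> p1" "p1 \<le> 1" "0 \<le> p0" "p0 \<le> 1"
  defines "f \<equiv> \<lambda>x. x*r1/(x*r1+(1-x)*r0)"
  defines "t \<equiv> \<delta>*p1+(1-\<delta>)*p0"
  defines "u \<equiv> \<delta>*f p1 + (1-\<delta>)*f p0"
  shows "(r0 \<le> r1 \<longrightarrow> t \<le> u \<and> u \<le> f t) \<and> (r1 \<le> r0 \<longrightarrow> f t \<le> u \<and> u \<le> t)"
proof -
  define den where "den = (\<lambda>x::real. x*r1+(1-x)*r0)"
  have t01: "0 \<le> t" "t \<le> 1"
  proof -
    have "\<delta>*p1 \<ge> 0" "(1-\<delta>)*p0 \<ge> 0" using d p by auto
    then show "0 \<le> t" unfolding t_def by linarith
    have "\<delta>*p1 \<le> \<delta>" "(1-\<delta>)*p0 \<le> 1-\<delta>" using d p by (auto simp: mult_left_le)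
    then show "t \<le> 1" unfolding t_def by linarith
  qed
  have D1: "den p1 > 0" "den p0 > 0" "den t > 0"
    using den_pos[OF r] p t01 unfolding den_def by auto
  have fx: "f x - x = x*(1-x)*(r1-r0)/den x" if "den x > 0" for x
    using that unfolding f_def den_def by (simp add: field_simps; simp add: algebra_simps)
  have fd: "f t - f x = (t-x)*r0*r1/(den t * den x)" if "den x > 0" for x
    using that D1 unfolding f_def den_def by (simp add: field_simps; simp add: algebra_simps)
  have e1: "u - t = \<delta>*(p1*(1-p1)*(r1-r0)/den p1) + (1-\<delta>)*(p0*(1-p0)*(r1-r0)/den p0)"
  proof -
    have "u - t = \<delta>*(f p1 - p1) + (1-\<delta>)*(f p0 - p0)" unfolding u_def t_def by (simp add: algebra_simps)
    then show ?thesis using fx[OF D1(1)] fx[OF D1(2)] by simp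
  qed
  have e2: "f t - u = r0*r1*\<delta>*(1-\<delta>)*(p0-p1)^2*(r1-r0)/(den t * den p1 * den p0)"
  proof -
    have "f t - u = \<delta>*(f t - f p1) + (1-\<delta>)*(f t - f p0)" unfolding u_def by (simp add: algebra_simps)
    also have "\<dots> = \<delta>*((t-p1)*r0*r1/(den t * den p1)) + (1-\<delta>)*((t-p0)*r0*r1/(den t * den p0))"
      using fd[OF D1(1)] fd[OF D1(2)] by simp
    also have "\<dots> = r0*r1*\<delta>*(1-\<delta>)*(p0-p1)/den t * (1/den p1 - 1/den p0)"
    proof -
      have "t - p1 = (1-\<delta>)*(p0-p1)" "t - p0 = -(\<delta>*(p0-p1))" unfolding t_def by (simp_all add: algebra_simps)
      note h = this
      have "\<delta>*((t-p1)*r0*r1/(den t * den p1)) + (1-\<delta>)*((t-p0)*r0*r1/(den t * den p0))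
          = \<delta>*(((1-\<delta>)*(p0-p1))*r0*r1/(den t * den p1)) + (1-\<delta>)*((-(\<delta>*(p0-p1)))*r0*r1/(den t * den p0))"
        by (simp only: h)
      also have "\<dots> = r0*r1*\<delta>*(1-\<delta>)*(p0-p1)/den t * (1/den p1 - 1/den p0)"
        using D1 by (simp add: field_simps)
      finally show ?thesis .
    qed
    also have "1/den p1 - 1/den p0 = (p0-p1)*(r1-r0)/(den p1 * den p0)"
      using D1 unfolding den_def by (simp add: field_simps; simp add: algebra_simps)
    also have "r0*r1*\<delta>*(1-\<delta>)*(p0-p1)/den t * ((p0-p1)*(r1-r0)/(den p1 * den p0)) = r0*r1*\<delta>*(1-\<delta>)*(p0-p1)^2*(r1-r0)/(den t * den p1 * den p0)"
      by (simp add: power2_eq_square mult_ac)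
    finally show ?thesis .
  qed
  have g1: "p1*(1-p1) \<ge> 0" "p0*(1-p0) \<ge> 0" using p by auto
  have g2: "r0*r1*\<delta>*(1-\<delta>)*(p0-p1)^2 \<ge> 0" using r d by auto
  show ?thesis
  proof (intro conjI impI)
    assume "r0 \<le> r1"
    then have "u - t \<ge> 0" unfolding e1 using g1 D1 d p by (intro add_nonneg_nonneg mult_nonneg_nonneg divide_nonneg_pos) auto
    then show "t \<le> u" by simp
    have "r0*r1*\<delta>*(1-\<delta>)*(p0-p1)^2*(r1-r0) \<ge> 0" using g2 \<open>r0 \<le> r1\<close> by simp
    then have "f t - u \<ge> 0" unfolding e2 using D1 by simp
    then show "u \<le> f t" by simp
  next
    assume "r1 \<le> r0"
    then have "u - t \<le> 0" unfolding e1 using g1 D1 d p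
      by (intro add_nonpos_nonpos mult_nonneg_nonpos divide_nonpos_pos mult_nonneg_nonpos) auto
    then show "u \<le> t" by simp
    have "r0*r1*\<delta>*(1-\<delta>)*(p0-p1)^2*(r1-r0) \<le> 0" using g2 \<open>r1 \<le> r0\<close> by (simp add: mult_nonneg_nonpos)
    then have "f t - u \<le> 0" unfolding e2 using D1 by (simp add: divide_nonpos_pos)
    then show "f t \<le> u" by simp
  qed
qed



definition ff :: "real \<Rightarrow> real \<Rightarrow> real \<Rightarrow> real" where
  "ff a b x = x*a/(x*a+(1-x)*b)"

lemma ff_strict:
  assumes "a > 0" "b > 0" "0 \<le> p" "p < q" "q \<le> 1"
  shows "ff a b p < ff a b q"
proof -
  have d1: "p*a+(1-p)*b > 0" "q*a+(1-q)*b > 0" using den_pos[of a b] assms by auto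
  have "ff a b q - ff a b p = (q-p)*a*b/((q*a+(1-q)*b)*(p*a+(1-p)*b))"
    using d1 unfolding ff_def by (simp add: field_simps; simp add: algebra_simps)
  also have "\<dots> > 0" using d1 assms by (intro divide_pos_pos mult_pos_pos) auto
  finally show ?thesis by simp
qed

lemma comb:
  fixes X d1 d2 t u1 u2 g1 g2 :: real
  assumes "(0\<le>d1 \<and> 0\<le>d2) \<or> (d1\<le>0 \<and> d2\<le>0)"
    and "(t\<le>u1 \<and> u1\<le>g1 \<and> g2\<le>u2 \<and> u2\<le>t) \<or> (g1\<le>u1 \<and> u1\<le>t \<and> t\<le>u2 \<and> u2\<le>g2)"
  shows "min (X+d1*t-d2*t) (X+d1*g1-d2*g2) \<le> X+d1*u1-d2*u2 \<and> X+d1*u1-d2*u2 \<le> max (X+d1*t-d2*t) (X+d1*g1-d2*g2)"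
proof -
  have e1: "(X+d1*u1-d2*u2) - (X+d1*t-d2*t) = d1*(u1-t) + d2*(t-u2)" by (simp add: algebra_simps)
  have e2: "(X+d1*g1-d2*g2) - (X+d1*u1-d2*u2) = d1*(g1-u1) + d2*(u2-g2)" by (simp add: algebra_simps)
  have "(0 \<le> d1*(u1-t) + d2*(t-u2) \<and> 0 \<le> d1*(g1-u1) + d2*(u2-g2)) \<or>
        (d1*(u1-t) + d2*(t-u2) \<le> 0 \<and> d1*(g1-u1) + d2*(u2-g2) \<le> 0)"
  proof -
    from assms(2) consider (a) "t\<le>u1" "u1\<le>g1" "g2\<le>u2" "u2\<le>t" | (b) "g1\<le>u1" "u1\<le>t" "t\<le>u2" "u2\<le>g2" by blast
    then show ?thesis
    proof cases
      case a
      from assms(1) show ?thesis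
      proof
        assume h: "0\<le>d1 \<and> 0\<le>d2"
        have "0 \<le> d1*(u1-t)" "0 \<le> d2*(t-u2)" "0 \<le> d1*(g1-u1)" "0 \<le> d2*(u2-g2)" using h a by simp_all
        then show ?thesis by linarith
      next
        assume h: "d1\<le>0 \<and> d2\<le>0"
        have "d1*(u1-t) \<le> 0" "d2*(t-u2) \<le> 0" "d1*(g1-u1) \<le> 0" "d2*(u2-g2) \<le> 0" using h a
          by (simp_all add: mult_nonpos_nonneg)
        then show ?thesis by linarith
      qed
    next
      case b
      from assms(1) show ?thesis
      proof
        assume h: "0\<le>d1 \<and> 0\<le>d2"
        have "d1*(u1-t) \<le> 0" "d2*(t-u2) \<le> 0" "d1*(g1-u1) \<le> 0" "d2*(u2-g2) \<le> 0" using h b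
          by (simp_all add: mult_nonneg_nonpos)
        then show ?thesis by linarith
      next
        assume h: "d1\<le>0 \<and> d2\<le>0"
        have "0 \<le> d1*(u1-t)" "0 \<le> d2*(t-u2)" "0 \<le> d1*(g1-u1)" "0 \<le> d2*(u2-g2)" using h b
          by (simp_all add: mult_nonpos_nonpos)
        then show ?thesis by linarith
      qed
    qed
  qed
  then show ?thesis
  proof
    assume h: "0 \<le> d1*(u1-t) + d2*(t-u2) \<and> 0 \<le> d1*(g1-u1) + d2*(u2-g2)"
    have "X+d1*t-d2*t \<le> X+d1*u1-d2*u2" "X+d1*u1-d2*u2 \<le> X+d1*g1-d2*g2"
    proof -
      have "0 \<le> (X+d1*u1-d2*u2) - (X+d1*t-d2*t)" using e1 h by simp
      then show "X+d1*t-d2*t \<le> X+d1*u1-d2*u2" by simp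
      have "0 \<le> (X+d1*g1-d2*g2) - (X+d1*u1-d2*u2)" using e2 h by simp
      then show "X+d1*u1-d2*u2 \<le> X+d1*g1-d2*g2" by simp
    qed
    then show ?thesis by (simp add: min_le_iff_disj le_max_iff_disj)
  next
    assume h: "d1*(u1-t) + d2*(t-u2) \<le> 0 \<and> d1*(g1-u1) + d2*(u2-g2) \<le> 0"
    have "X+d1*u1-d2*u2 \<le> X+d1*t-d2*t" "X+d1*g1-d2*g2 \<le> X+d1*u1-d2*u2"
    proof -
      have "(X+d1*u1-d2*u2) - (X+d1*t-d2*t) \<le> 0" using e1 h by simp
      then show "X+d1*u1-d2*u2 \<le> X+d1*t-d2*t" by simp
      have "(X+d1*g1-d2*g2) - (X+d1*u1-d2*u2) \<le> 0" using e2 h by simp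
      then show "X+d1*g1-d2*g2 \<le> X+d1*u1-d2*u2" by simp
    qed
    then show ?thesis by (simp add: min_le_iff_disj le_max_iff_disj)
  qed
qed



lemma ratio2: "P1 + P0 \<noteq> (0::real) \<Longrightarrow> (P1*m1 + P0*m0)/(P1+P0) = m0 + (m1-m0)*(P1/(P1+P0))"
  by (simp add: field_simps)

lemma ff_alt: "(c::real) > 0 \<Longrightarrow> c*(p*a)/(c*(p*a) + c*((1-p)*b)) = ff a b p"
  unfolding ff_def by (simp add: distrib_left[symmetric])

definition pqf :: "(bool \<Rightarrow> bool \<Rightarrow> bool \<Rightarrow> real) \<Rightarrow> (bool \<Rightarrow> bool \<Rightarrow> bool \<Rightarrow> bool) \<Rightarrow> real" where
  "pqf P q = (\<Sum>x\<in>UNIV. \<Sum>y\<in>UNIV. \<Sum>z\<in>UNIV. if q x y z then P x y z else 0)"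
definition cef :: "(bool \<Rightarrow> bool \<Rightarrow> bool \<Rightarrow> real) \<Rightarrow> (bool \<Rightarrow> bool \<Rightarrow> real) \<Rightarrow> (bool \<Rightarrow> bool \<Rightarrow> bool \<Rightarrow> bool) \<Rightarrow> real" where
  "cef P m q = (\<Sum>x\<in>UNIV. \<Sum>y\<in>UNIV. \<Sum>z\<in>UNIV. if q x y z then P x y z * m x y else 0) / pqf P q"

context
  fixes \<delta> \<pi>1 \<pi>0 r1 r0 :: real and m :: "bool \<Rightarrow> bool \<Rightarrow> real" and P :: "bool \<Rightarrow> bool \<Rightarrow> bool \<Rightarrow> real"
  assumes prm: "0<\<delta>" "\<delta><1" "0<\<pi>1" "\<pi>1<1" "0<\<pi>0" "\<pi>0<1" "0<r1" "r1<1" "0<r0" "r0<1"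
  assumes Pdef: "\<And>x y z. P x y z = (if z then \<delta> else 1-\<delta>)
        * (if y then (if z then \<pi>1 else \<pi>0) else 1 - (if z then \<pi>1 else \<pi>0))
        * (if x then (if y then r1 else r0) else 1 - (if y then r1 else r0))"
begin


lemma Ppos: "P x y z > 0" unfolding Pdef using prm by (cases x; cases y; cases z; simp)

lemma E_AD: "cef P m (\<lambda>x' y z'. x' = x \<and> z' = z) = m x False + (m x True - m x False) *
      ff (if x then r1 else 1-r1) (if x then r0 else 1-r0) (if z then \<pi>1 else \<pi>0)"
proof -
  have s: "cef P m (\<lambda>x' y z'. x' = x \<and> z' = z) = (P x True z * m x True + P x False z * m x False)/(P x True z + P x False z)"
    unfolding cef_def pqf_def by (cases x; cases z) (simp_all add: UNIV_bool add_ac)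
  have pos: "P x True z + P x False z \<noteq> 0" using Ppos[of x True z] Ppos[of x False z] by simp
  have r: "P x True z/(P x True z + P x False z) = ff (if x then r1 else 1-r1) (if x then r0 else 1-r0) (if z then \<pi>1 else \<pi>0)"
  proof -
    have e: "P x True z = (if z then \<delta> else 1-\<delta>) * ((if z then \<pi>1 else \<pi>0) * (if x then r1 else 1-r1))"
         "P x False z = (if z then \<delta> else 1-\<delta>) * ((1-(if z then \<pi>1 else \<pi>0)) * (if x then r0 else 1-r0))"
      unfolding Pdef by (cases x; cases z; simp)+
    have c: "(if z then \<delta> else 1-\<delta>) > 0" using prm by simp
    show ?thesis unfolding e by (rule ff_alt[OF c])
  qed
  show ?thesis unfolding s ratio2[OF pos] r ..
qed

lemma E_AC: "cef P m (\<lambda>x' y' z. x' = x \<and> y' = y) = m x y"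
proof -
  have s: "cef P m (\<lambda>x' y' z. x' = x \<and> y' = y) = ((P x y True + P x y False) * m x y)/(P x y True + P x y False)"
    unfolding cef_def pqf_def by (cases x; cases y) (simp_all add: UNIV_bool add_ac algebra_simps)
  have pos: "P x y True + P x y False \<noteq> 0" using Ppos[of x y True] Ppos[of x y False] by simp
  show ?thesis unfolding s using pos by simp
qed

lemma E_A: "cef P m (\<lambda>x' y z. x' = x) = m x False + (m x True - m x False) *
      ff (if x then r1 else 1-r1) (if x then r0 else 1-r0) (\<delta>*\<pi>1+(1-\<delta>)*\<pi>0)"
proof -
  have s: "cef P m (\<lambda>x' y z. x' = x) = ((P x True True + P x True False) * m x True + (P x False True + P x False False) * m x False)
     /((P x True True + P x True False) + (P x False True + P x False False))"
    unfolding cef_def pqf_def by (cases x) (simp_all add: UNIV_bool add_ac algebra_simps)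
  have pos: "(P x True True + P x True False) + (P x False True + P x False False) \<noteq> 0"
    using Ppos[of x True True] Ppos[of x True False] Ppos[of x False True] Ppos[of x False False] by simp
  have r: "(P x True True + P x True False) /((P x True True + P x True False) + (P x False True + P x False False))
     = ff (if x then r1 else 1-r1) (if x then r0 else 1-r0) (\<delta>*\<pi>1+(1-\<delta>)*\<pi>0)"
  proof -
    have e: "P x True True + P x True False = (\<delta>*\<pi>1+(1-\<delta>)*\<pi>0) * (if x then r1 else 1-r1)"
         "P x False True + P x False False = (1-(\<delta>*\<pi>1+(1-\<delta>)*\<pi>0)) * (if x then r0 else 1-r0)"
      unfolding Pdef by (cases x; simp add: algebra_simps)+
    show ?thesis unfolding e ff_def ..
  qed
  show ?thesis unfolding s ratio2[OF pos] r ..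
qed

lemma P_D: "pqf P (\<lambda>x y z'. z' = z) = (if z then \<delta> else 1-\<delta>)"
  unfolding pqf_def Pdef by (cases z) (simp_all add: UNIV_bool algebra_simps)

lemma P_C: "pqf P (\<lambda>x y' z. y' = y) = (if y then \<delta>*\<pi>1+(1-\<delta>)*\<pi>0 else 1-(\<delta>*\<pi>1+(1-\<delta>)*\<pi>0))"
  unfolding pqf_def Pdef by (cases y) (simp_all add: UNIV_bool algebra_simps)

lemma alg_main:
  assumes mono: "(cef P m (\<lambda>x y z. x \<and> z) \<ge> cef P m (\<lambda>x y z. x \<and> \<not>z) \<and> cef P m (\<lambda>x y z. \<not>x \<and> z) \<ge> cef P m (\<lambda>x y z. \<not>x \<and> \<not>z))
     \<or> (cef P m (\<lambda>x y z. x \<and> z) \<le> cef P m (\<lambda>x y z. x \<and> \<not>z) \<and> cef P m (\<lambda>x y z. \<not>x \<and> z) \<le> cef P m (\<lambda>x y z. \<not>x \<and> \<not>z))"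
  shows "min (cef P m (\<lambda>x y z. x \<and> y) * pqf P (\<lambda>x y z. y) + cef P m (\<lambda>x y z. x \<and> \<not>y) * pqf P (\<lambda>x y z. \<not>y)
            - cef P m (\<lambda>x y z. \<not>x \<and> y) * pqf P (\<lambda>x y z. y) - cef P m (\<lambda>x y z. \<not>x \<and> \<not>y) * pqf P (\<lambda>x y z. \<not>y))
          (cef P m (\<lambda>x y z. x) - cef P m (\<lambda>x y z. \<not>x))
      \<le> cef P m (\<lambda>x y z. x \<and> z) * pqf P (\<lambda>x y z. z) + cef P m (\<lambda>x y z. x \<and> \<not>z) * pqf P (\<lambda>x y z. \<not>z)
            - cef P m (\<lambda>x y z. \<not>x \<and> z) * pqf P (\<lambda>x y z. z) - cef P m (\<lambda>x y z. \<not>x \<and> \<not>z) * pqf P (\<lambda>x y z. \<not>z)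
    \<and> cef P m (\<lambda>x y z. x \<and> z) * pqf P (\<lambda>x y z. z) + cef P m (\<lambda>x y z. x \<and> \<not>z) * pqf P (\<lambda>x y z. \<not>z)
            - cef P m (\<lambda>x y z. \<not>x \<and> z) * pqf P (\<lambda>x y z. z) - cef P m (\<lambda>x y z. \<not>x \<and> \<not>z) * pqf P (\<lambda>x y z. \<not>z)
      \<le> max (cef P m (\<lambda>x y z. x \<and> y) * pqf P (\<lambda>x y z. y) + cef P m (\<lambda>x y z. x \<and> \<not>y) * pqf P (\<lambda>x y z. \<not>y)
            - cef P m (\<lambda>x y z. \<not>x \<and> y) * pqf P (\<lambda>x y z. y) - cef P m (\<lambda>x y z. \<not>x \<and> \<not>y) * pqf P (\<lambda>x y z. \<not>y))
          (cef P m (\<lambda>x y z. x) - cef P m (\<lambda>x y z. \<not>x))"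
proof -
  define t where "t = \<delta>*\<pi>1+(1-\<delta>)*\<pi>0"
  define fT where "fT = ff r1 r0"
  define fF where "fF = ff (1-r1) (1-r0)"
  define dT where "dT = m True True - m True False"
  define dF where "dF = m False True - m False False"
  define X where "X = m True False - m False False"
  define uT where "uT = \<delta> * fT \<pi>1 + (1-\<delta>) * fT \<pi>0"
  define uF where "uF = \<delta> * fF \<pi>1 + (1-\<delta>) * fF \<pi>0"
  have ad1: "cef P m (\<lambda>x y z. x \<and> z) = m True False + dT * fT \<pi>1" using E_AD[of True True] by (simp add: dT_def fT_def)
  have ad2: "cef P m (\<lambda>x y z. x \<and> \<not>z) = m True False + dT * fT \<pi>0" using E_AD[of True False] by (simp add: dT_def fT_def)
  have ad3: "cef P m (\<lambda>x y z. \<not>x \<and> z) = m False False + dF * fF \<pi>1" using E_AD[of False True] by (simp add: dF_def fF_def)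
  have ad4: "cef P m (\<lambda>x y z. \<not>x \<and> \<not>z) = m False False + dF * fF \<pi>0" using E_AD[of False False] by (simp add: dF_def fF_def)
  have ac1: "cef P m (\<lambda>x y z. x \<and> y) = m True True" using E_AC[of True True] by simp
  have ac2: "cef P m (\<lambda>x y z. x \<and> \<not>y) = m True False" using E_AC[of True False] by simp
  have ac3: "cef P m (\<lambda>x y z. \<not>x \<and> y) = m False True" using E_AC[of False True] by simp
  have ac4: "cef P m (\<lambda>x y z. \<not>x \<and> \<not>y) = m False False" using E_AC[of False False] by simp
  have a1: "cef P m (\<lambda>x y z. x) = m True False + dT * fT t" using E_A[of True] by (simp add: dT_def fT_def t_def)
  have a2: "cef P m (\<lambda>x y z. \<not>x) = m False False + dF * fF t" using E_A[of False] by (simp add: dF_def fF_def t_def)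
  have pd1: "pqf P (\<lambda>x y z. z) = \<delta>" using P_D[of True] by simp
  have pd2: "pqf P (\<lambda>x y z. \<not>z) = 1-\<delta>" using P_D[of False] by simp
  have pc1: "pqf P (\<lambda>x y z. y) = t" using P_C[of True] by (simp add: t_def)
  have pc2: "pqf P (\<lambda>x y z. \<not>y) = 1-t" using P_C[of False] by (simp add: t_def)
  have RO: "cef P m (\<lambda>x y z. x \<and> z) * pqf P (\<lambda>x y z. z) + cef P m (\<lambda>x y z. x \<and> \<not>z) * pqf P (\<lambda>x y z. \<not>z)
            - cef P m (\<lambda>x y z. \<not>x \<and> z) * pqf P (\<lambda>x y z. z) - cef P m (\<lambda>x y z. \<not>x \<and> \<not>z) * pqf P (\<lambda>x y z. \<not>z)
        = X + dT*uT - dF*uF"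
    unfolding ad1 ad2 ad3 ad4 pd1 pd2 X_def uT_def uF_def by (simp add: algebra_simps)
  have RT: "cef P m (\<lambda>x y z. x \<and> y) * pqf P (\<lambda>x y z. y) + cef P m (\<lambda>x y z. x \<and> \<not>y) * pqf P (\<lambda>x y z. \<not>y)
            - cef P m (\<lambda>x y z. \<not>x \<and> y) * pqf P (\<lambda>x y z. y) - cef P m (\<lambda>x y z. \<not>x \<and> \<not>y) * pqf P (\<lambda>x y z. \<not>y)
        = X + dT*t - dF*t"
    unfolding ac1 ac2 ac3 ac4 pc1 pc2 X_def dT_def dF_def by (simp add: algebra_simps)
  have RC: "cef P m (\<lambda>x y z. x) - cef P m (\<lambda>x y z. \<not>x) = X + dT*fT t - dF*fF t"
    unfolding a1 a2 X_def by (simp add: algebra_simps)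
  have main: "min (X + dT*t - dF*t) (X + dT*fT t - dF*fF t) \<le> X + dT*uT - dF*uF
     \<and> X + dT*uT - dF*uF \<le> max (X + dT*t - dF*t) (X + dT*fT t - dF*fF t)"
  proof (cases "\<pi>1 = \<pi>0")
    case True
    then have "uT = fT t" "uF = fF t" unfolding uT_def uF_def t_def by (simp_all add: algebra_simps)
    then show ?thesis by simp
  next
    case False
    have j1: "(r0 \<le> r1 \<longrightarrow> t \<le> uT \<and> uT \<le> fT t) \<and> (r1 \<le> r0 \<longrightarrow> fT t \<le> uT \<and> uT \<le> t)"
      using jensen2[of r1 r0 \<delta> \<pi>1 \<pi>0] prm unfolding uT_def fT_def t_def ff_def by simp
    have j2: "(1-r0 \<le> 1-r1 \<longrightarrow> t \<le> uF \<and> uF \<le> fF t) \<and> (1-r1 \<le> 1-r0 \<longrightarrow> fF t \<le> uF \<and> uF \<le> t)"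
      using jensen2[of "1-r1" "1-r0" \<delta> \<pi>1 \<pi>0] prm unfolding uF_def fF_def t_def ff_def by simp
    have c2: "(t\<le>uT \<and> uT\<le>fT t \<and> fF t\<le>uF \<and> uF\<le>t) \<or> (fT t\<le>uT \<and> uT\<le>t \<and> t\<le>uF \<and> uF\<le>fF t)"
    proof (cases "r0 \<le> r1")
      case True then show ?thesis using j1 j2 by auto
    next
      case False then show ?thesis using j1 j2 by auto
    qed
    have c1: "(0\<le>dT \<and> 0\<le>dF) \<or> (dT\<le>0 \<and> dF\<le>0)"
    proof -
      have g: "(ff a b \<pi>1 - ff a b \<pi>0 > 0) = (\<pi>0 < \<pi>1) \<and> (ff a b \<pi>1 - ff a b \<pi>0 < 0) = (\<pi>1 < \<pi>0)"
        if "a > 0" "b > 0" for a b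
      proof (cases "\<pi>0 < \<pi>1")
        case True
        then show ?thesis using ff_strict[of a b \<pi>0 \<pi>1] that prm by auto
      next
        case f2: False
        then have "\<pi>1 < \<pi>0" using False by auto
        then show ?thesis using ff_strict[of a b \<pi>1 \<pi>0] that prm by auto
      qed
      have sT: "(fT \<pi>1 - fT \<pi>0 > 0) = (\<pi>0 < \<pi>1)" "(fT \<pi>1 - fT \<pi>0 < 0) = (\<pi>1 < \<pi>0)"
        using g[of r1 r0] prm unfolding fT_def by auto
      have sF: "(fF \<pi>1 - fF \<pi>0 > 0) = (\<pi>0 < \<pi>1)" "(fF \<pi>1 - fF \<pi>0 < 0) = (\<pi>1 < \<pi>0)"
        using g[of "1-r1" "1-r0"] prm unfolding fF_def by auto
      have m2: "(0 \<le> dT * (fT \<pi>1 - fT \<pi>0) \<and> 0 \<le> dF * (fF \<pi>1 - fF \<pi>0)) \<or>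
                (dT * (fT \<pi>1 - fT \<pi>0) \<le> 0 \<and> dF * (fF \<pi>1 - fF \<pi>0) \<le> 0)"
        using mono unfolding ad1 ad2 ad3 ad4 by (simp add: algebra_simps)
      show ?thesis
      proof (cases "\<pi>0 < \<pi>1")
        case True
        then have "fT \<pi>1 - fT \<pi>0 > 0" "fF \<pi>1 - fF \<pi>0 > 0" using sT sF by auto
        then show ?thesis using m2 by (auto simp: zero_le_mult_iff mult_le_0_iff)
      next
        case f2: False
        then have "fT \<pi>1 - fT \<pi>0 < 0" "fF \<pi>1 - fF \<pi>0 < 0" using sT sF False by auto
        then show ?thesis using m2 by (auto simp: zero_le_mult_iff mult_le_0_iff)
      qed
    qed
    show ?thesis by (rule comb[OF c1 c2])
  qed
  show ?thesis unfolding RO RT RC by (rule main)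
qed

end


lemma wrap:
  fixes P :: "bool \<Rightarrow> bool \<Rightarrow> bool \<Rightarrow> real"
  assumes pos: "\<And>x y z. P x y z > 0"
    and tot: "(P True True True + P True True False) + (P True False True + P True False False)
            + ((P False True True + P False True False) + (P False False True + P False False False)) = 1"
    and form: "\<And>x y z. P x y z = (P True y z + P False y z) * (P x y True + P x y False)
        / ((P True y True + P True y False) + (P False y True + P False y False))"
  shows "\<exists>\<delta> \<pi>1 \<pi>0 r1 r0. (0<\<delta> \<and> \<delta><1 \<and> 0<\<pi>1 \<and> \<pi>1<1 \<and> 0<\<pi>0 \<and> \<pi>0<1 \<and> 0<r1 \<and> r1<1 \<and> 0<r0 \<and> r0<1) \<and>
     (\<forall>x y z. P x y z = (if z then \<delta> else 1-\<delta>)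
        * (if y then (if z then \<pi>1 else \<pi>0) else 1 - (if z then \<pi>1 else \<pi>0))
        * (if x then (if y then r1 else r0) else 1 - (if y then r1 else r0)))"
proof -
  define CD where "CD y z = P True y z + P False y z" for y z
  define AC where "AC x y = P x y True + P x y False" for x y
  define Dz where "Dz z = CD True z + CD False z" for z
  define Cy where "Cy y = AC True y + AC False y" for y
  have CDp: "CD y z > 0" for y z unfolding CD_def using pos[of True y z] pos[of False y z] by simp
  have ACp: "AC x y > 0" for x y unfolding AC_def using pos[of x y True] pos[of x y False] by simp
  have Dzp: "Dz z > 0" for z unfolding Dz_def using CDp[of True z] CDp[of False z] by simp
  have Cyp: "Cy y > 0" for y unfolding Cy_def using ACp[of True y] ACp[of False y] by simp
  have totD: "Dz True + Dz False = 1" using tot unfolding Dz_def CD_def by (simp add: algebra_simps)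
  have Cy_alt: "Cy y = (P True y True + P True y False) + (P False y True + P False y False)" for y
    unfolding Cy_def AC_def by simp
  have F: "P x y z = CD y z * (AC x y / Cy y)" for x y z
    using form[of x y z] unfolding CD_def AC_def Cy_alt by simp
  define \<delta> where "\<delta> = Dz True"
  define pi where "pi z = CD True z / Dz z" for z
  define r where "r y = AC True y / Cy y" for y
  have L1: "CD y z = (if z then \<delta> else 1-\<delta>) * (if y then pi z else 1 - pi z)" for y z
  proof -
    have dz: "(if z then \<delta> else 1-\<delta>) = Dz z" using totD unfolding \<delta>_def by (cases z) auto
    have "(if y then pi z else 1 - pi z) = CD y z / Dz z"
      using Dzp[of z] unfolding pi_def Dz_def by (cases y) (auto simp: field_simps)
    then show ?thesis unfolding dz using Dzp[of z] by simp
  qed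
  have L2: "AC x y / Cy y = (if x then r y else 1 - r y)" for x y
    using Cyp[of y] unfolding r_def Cy_def by (cases x) (auto simp: field_simps)
  have bnd: "0 < pi z" "pi z < 1" "0 < r y" "r y < 1" "0 < \<delta>" "\<delta> < 1" for y z
  proof -
    show "0 < pi z" unfolding pi_def using CDp Dzp by simp
    show "pi z < 1" unfolding pi_def Dz_def using CDp[of True z] CDp[of False z] by simp
    show "0 < r y" unfolding r_def using ACp Cyp by simp
    show "r y < 1" unfolding r_def Cy_def using ACp[of True y] ACp[of False y] by simp
    show "0 < \<delta>" unfolding \<delta>_def using Dzp by simp
    show "\<delta> < 1" using totD Dzp[of False] unfolding \<delta>_def by simp
  qed
  show ?thesis
  proof (intro exI conjI allI)
    fix x y z
    show "P x y z = (if z then \<delta> else 1-\<delta>)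
        * (if y then (if z then pi True else pi False) else 1 - (if z then pi True else pi False))
        * (if x then (if y then r True else r False) else 1 - (if y then r True else r False))"
      unfolding F L1 L2 by (cases y; cases z; simp)
  qed (use bnd in auto)
qed



lemma prop_int:
  fixes Y :: "'a \<Rightarrow> real" and M :: "'a measure"
  assumes E1: "E1 \<in> sets M" and E2: "E2 \<in> sets M" and Y[measurable]: "Y \<in> borel_measurable M" and k: "k \<ge> 0"
    and fin: "finite_measure M"
    and eq: "\<And>B. B \<in> sets borel \<Longrightarrow> measure M (E1 \<inter> (Y -` B \<inter> space M)) = k * measure M (E2 \<inter> (Y -` B \<inter> space M))"
  shows "(\<integral>w. indicator E1 w * Y w \<partial>M) = k * (\<integral>w. indicator E2 w * Y w \<partial>M)"
proof -
  define N where "N E = distr (density M (indicator E)) borel Y" for E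
  have int: "(\<integral>w. indicator E w * Y w \<partial>M) = (\<integral>x. x \<partial>N E)" if E: "E \<in> sets M" for E
  proof -
    have Yd: "Y \<in> borel_measurable (density M (indicator E))"
      using Y by (simp add: measurable_cong_sets[OF sets_density refl])
    have "(\<integral>x. x \<partial>N E) = (\<integral>w. Y w \<partial>density M (\<lambda>w. ennreal (indicator E w)))"
      unfolding N_def by (simp add: integral_distr[OF Yd] ennreal_indicator)
    also have "\<dots> = (\<integral>w. indicator E w *\<^sub>R Y w \<partial>M)"
      by (rule integral_density) (use E in auto)
    finally show ?thesis by simp
  qed
  have NN: "N E1 = density (N E2) (\<lambda>_. ennreal k)"
  proof (rule measure_eqI)
    show "sets (N E1) = sets (density (N E2) (\<lambda>_. ennreal k))" by (simp add: N_def)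
  next
    fix B assume "B \<in> sets (N E1)"
    then have B: "B \<in> sets borel" by (simp add: N_def)
    have em: "emeasure (N E) B = emeasure M (E \<inter> (Y -` B \<inter> space M))" if E: "E \<in> sets M" for E
    proof -
      have "emeasure (N E) B = emeasure (density M (indicator E)) (Y -` B \<inter> space M)"
        unfolding N_def by (subst emeasure_distr) (use B Y in \<open>auto simp: measurable_cong_sets[OF sets_density refl]\<close>)
      also have "\<dots> = emeasure M (E \<inter> (Y -` B \<inter> space M))"
        by (rule emeasure_restricted) (use E B Y in auto)
      finally show ?thesis .
    qed
    have "emeasure (density (N E2) (\<lambda>_. ennreal k)) B = ennreal k * emeasure (N E2) B"
      by (rule emeasure_density_const) (use B in \<open>simp add: N_def\<close>)
    also have "\<dots> = ennreal k * emeasure M (E2 \<inter> (Y -` B \<inter> space M))" using em[OF E2] by simp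
    also have "\<dots> = ennreal (k * measure M (E2 \<inter> (Y -` B \<inter> space M)))"
      using fin k by (simp add: finite_measure.emeasure_eq_measure ennreal_mult)
    also have "\<dots> = ennreal (measure M (E1 \<inter> (Y -` B \<inter> space M)))" using eq[OF B] by simp
    also have "\<dots> = emeasure (N E1) B" using em[OF E1] fin by (simp add: finite_measure.emeasure_eq_measure)
    finally show "emeasure (N E1) B = emeasure (density (N E2) (\<lambda>_. ennreal k)) B" ..
  qed
  have "(\<integral>x. x \<partial>N E1) = (\<integral>x. k *\<^sub>R x \<partial>N E2)"
    unfolding NN by (rule integral_density) (use k in \<open>auto simp: N_def\<close>)
  also have "\<dots> = k * (\<integral>x. x \<partial>N E2)" by simp
  finally show ?thesis using int[OF E1] int[OF E2] by simp
qed



context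
  fixes M :: "'a measure" and A C D :: "'a \<Rightarrow> bool"
  assumes ps: "prob_space M"
    and mA: "A \<in> measurable M (count_space UNIV)"
    and mC: "C \<in> measurable M (count_space UNIV)"
    and mD: "D \<in> measurable M (count_space UNIV)"
begin

lemma cell_sets: "ev M (\<lambda>w. A w = x \<and> C w = y \<and> D w = z) \<in> sets M"
proof -
  have "ev M (\<lambda>w. A w = x \<and> C w = y \<and> D w = z) = (A -` {x} \<inter> space M) \<inter> (C -` {y} \<inter> space M) \<inter> (D -` {z} \<inter> space M)"
    unfolding ev_def by auto
  also have "\<dots> \<in> sets M"
    using measurable_sets[OF mA, of "{x}"] measurable_sets[OF mC, of "{y}"] measurable_sets[OF mD, of "{z}"] by auto
  finally show ?thesis .
qed

lemma ev_sets: "ev M (\<lambda>w. q (A w) (C w) (D w)) \<in> sets M"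
proof -
  have "ev M (\<lambda>w. q (A w) (C w) (D w)) = (\<Union>p\<in>{p. q (fst p) (fst (snd p)) (snd (snd p))}.
           ev M (\<lambda>w. A w = fst p \<and> C w = fst (snd p) \<and> D w = snd (snd p)))"
    unfolding ev_def by auto
  also have "\<dots> \<in> sets M"
    by (intro sets.finite_UN cell_sets) auto
  finally show ?thesis .
qed

lemma cell_int:
  fixes g :: "'a \<Rightarrow> real"
  assumes g: "integrable M g"
  shows "(\<integral>w. indicator (ev M (\<lambda>w. q (A w) (C w) (D w))) w * g w \<partial>M)
    = (\<Sum>x\<in>UNIV. \<Sum>y\<in>UNIV. \<Sum>z\<in>UNIV. if q x y z then (\<integral>w. indicator (ev M (\<lambda>w. A w = x \<and> C w = y \<and> D w = z)) w * g w \<partial>M) else 0)"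
proof -
  define F where "F x y z w = (if q x y z then indicator (ev M (\<lambda>w. A w = x \<and> C w = y \<and> D w = z)) w * g w else 0)" for x y z w
  have iF: "integrable M (F x y z)" for x y z
    unfolding F_def using integrable_mult_indicator[OF cell_sets g] by (cases "q x y z") auto
  have "(\<integral>w. indicator (ev M (\<lambda>w. q (A w) (C w) (D w))) w * g w \<partial>M) = (\<integral>w. (\<Sum>x\<in>UNIV. \<Sum>y\<in>UNIV. \<Sum>z\<in>UNIV. F x y z w) \<partial>M)"
    by (rule Bochner_Integration.integral_cong) (auto simp: F_def ev_def UNIV_bool indicator_def)
  also have "\<dots> = (\<Sum>x\<in>UNIV. \<Sum>y\<in>UNIV. \<Sum>z\<in>UNIV. integral\<^sup>L M (F x y z))"
    by (simp add: Bochner_Integration.integral_sum iF)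
  also have "\<dots> = (\<Sum>x\<in>UNIV. \<Sum>y\<in>UNIV. \<Sum>z\<in>UNIV. if q x y z then (\<integral>w. indicator (ev M (\<lambda>w. A w = x \<and> C w = y \<and> D w = z)) w * g w \<partial>M) else 0)"
    unfolding F_def by (intro sum.cong refl) auto
  finally show ?thesis .
qed

lemma pr_int: "pr M Q = (\<integral>w. indicator (ev M Q) w * 1 \<partial>M)"
  by (simp add: pr_def ev_def Int_absorb2)

lemma cell_pr:
  "pr M (\<lambda>w. q (A w) (C w) (D w))
    = (\<Sum>x\<in>UNIV. \<Sum>y\<in>UNIV. \<Sum>z\<in>UNIV. if q x y z then pr M (\<lambda>w. A w = x \<and> C w = y \<and> D w = z) else 0)"
  unfolding pr_int by (rule cell_int) (simp add: prob_space.finite_measure[OF ps] finite_measure.integrable_const)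

end

theorem corollary2:
  fixes M :: "'a measure" and A C D :: "'a \<Rightarrow> bool" and Y :: "'a \<Rightarrow> real"
  assumes "prob_space M"
    and "A \<in> measurable M (count_space UNIV)"
    and "C \<in> measurable M (count_space UNIV)"
    and "D \<in> measurable M (count_space UNIV)"
    and "Y \<in> borel_measurable M"
    and "integrable M Y"
    and factor: "\<And>x y z B. B \<in> sets borel \<Longrightarrow>
        pr M (\<lambda>w. A w = x \<and> C w = y \<and> D w = z \<and> Y w \<in> B)
        = pr M (\<lambda>w. D w = z)
          * (pr M (\<lambda>w. C w = y \<and> D w = z) / pr M (\<lambda>w. D w = z))
          * (pr M (\<lambda>w. A w = x \<and> C w = y) / pr M (\<lambda>w. C w = y))
          * (pr M (\<lambda>w. Y w \<in> B \<and> A w = x \<and> C w = y) / pr M (\<lambda>w. A w = x \<and> C w = y))"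
    and dep: "\<not> prob_space.indep_var M (count_space UNIV) C (count_space UNIV) D"
    and pos: "\<And>x y z. pr M (\<lambda>w. A w = x \<and> C w = y \<and> D w = z) > 0"
    and mono: "monotone_in M Y A D"
  shows "min (RD_adj M Y A C) (RD_crude M Y A) \<le> RD_adj M Y A D
       \<and> RD_adj M Y A D \<le> max (RD_adj M Y A C) (RD_crude M Y A)"
  proof -
  note ps = assms(1)
  note fin = prob_space.finite_measure[OF ps]
  note mA = assms(2) and mC = assms(3) and mD = assms(4)
  define P where "P x y z = pr M (\<lambda>w. A w = x \<and> C w = y \<and> D w = z)" for x y z
  have Pp: "P x y z > 0" for x y z unfolding P_def by (rule pos)
  have cp: "pr M (\<lambda>w. q (A w) (C w) (D w)) = pqf P q" for q
    unfolding pqf_def P_def by (rule cell_pr[OF ps mA mC mD])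
  have pD: "pr M (\<lambda>w. D w = z) = (P True True z + P True False z) + (P False True z + P False False z)" for z
    using cp[of "\<lambda>x y z'. z' = z"] by (cases z) (simp_all add: pqf_def UNIV_bool add_ac)
  have pCD: "pr M (\<lambda>w. C w = y \<and> D w = z) = P True y z + P False y z" for y z
    using cp[of "\<lambda>x y' z'. y' = y \<and> z' = z"] by (cases y; cases z) (simp_all add: pqf_def UNIV_bool add_ac)
  have pAC: "pr M (\<lambda>w. A w = x \<and> C w = y) = P x y True + P x y False" for x y
    using cp[of "\<lambda>x' y' z'. x' = x \<and> y' = y"] by (cases x; cases y) (simp_all add: pqf_def UNIV_bool add_ac)
  have pC: "pr M (\<lambda>w. C w = y) = (P True y True + P True y False) + (P False y True + P False y False)" for y
    using cp[of "\<lambda>x y' z'. y' = y"] by (cases y) (simp_all add: pqf_def UNIV_bool add_ac)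
  have pACp: "pr M (\<lambda>w. A w = x \<and> C w = y) > 0" for x y
    unfolding pAC using Pp[of x y True] Pp[of x y False] by simp
  have tot: "(P True True True + P True True False) + (P True False True + P True False False)
            + ((P False True True + P False True False) + (P False False True + P False False False)) = 1"
  proof -
    have "pr M (\<lambda>w. True) = 1" unfolding pr_def ev_def using prob_space.prob_space[OF ps] by simp
    then show ?thesis using cp[of "\<lambda>x y z. True"] by (simp add: pqf_def UNIV_bool add_ac)
  qed
  have fac: "pr M (\<lambda>w. A w = x \<and> C w = y \<and> D w = z \<and> Y w \<in> B)
      = P x y z / pr M (\<lambda>w. A w = x \<and> C w = y) * pr M (\<lambda>w. Y w \<in> B \<and> A w = x \<and> C w = y)"
    if B: "B \<in> sets borel" for x y z B
  proof -
    have u: "P x y z = pr M (\<lambda>w. D w = z)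
          * (pr M (\<lambda>w. C w = y \<and> D w = z) / pr M (\<lambda>w. D w = z))
          * (pr M (\<lambda>w. A w = x \<and> C w = y) / pr M (\<lambda>w. C w = y))"
      using factor[of UNIV x y z] pACp[of x y] unfolding P_def by simp
    show ?thesis using factor[OF B, of x y z] pACp[of x y] unfolding u by simp
  qed
  have form: "P x y z = (P True y z + P False y z) * (P x y True + P x y False)
        / ((P True y True + P True y False) + (P False y True + P False y False))" for x y z
  proof -
    have "P x y z = pr M (\<lambda>w. A w = x \<and> C w = y \<and> D w = z \<and> Y w \<in> UNIV)" unfolding P_def by simp
    also have "\<dots> = P x y z" using fac[of UNIV x y z] pACp[of x y] by simp
    have u: "P x y z = pr M (\<lambda>w. D w = z)
          * (pr M (\<lambda>w. C w = y \<and> D w = z) / pr M (\<lambda>w. D w = z))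
          * (pr M (\<lambda>w. A w = x \<and> C w = y) / pr M (\<lambda>w. C w = y))"
      using factor[of UNIV x y z] pACp[of x y] unfolding P_def by simp
    have dpos: "pr M (\<lambda>w. D w = z) > 0" unfolding pD using Pp[of True True z] Pp[of True False z] Pp[of False True z] Pp[of False False z] by simp
    show ?thesis using u dpos unfolding pD pCD pAC pC by simp
  qed
  obtain \<delta> \<pi>1 \<pi>0 r1 r0 where b: "0<\<delta>" "\<delta><1" "0<\<pi>1" "\<pi>1<1" "0<\<pi>0" "\<pi>0<1" "0<r1" "r1<1" "0<r0" "r0<1"
    and Pd: "\<forall>x y z. P x y z = (if z then \<delta> else 1-\<delta>)
        * (if y then (if z then \<pi>1 else \<pi>0) else 1 - (if z then \<pi>1 else \<pi>0))
        * (if x then (if y then r1 else r0) else 1 - (if y then r1 else r0))"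
    using wrap[of P, OF Pp tot form] by blast
  define m where "m x y = (\<integral>w. indicator (ev M (\<lambda>w. A w = x \<and> C w = y)) w * Y w \<partial>M) / pr M (\<lambda>w. A w = x \<and> C w = y)" for x y
  have S: "(\<integral>w. indicator (ev M (\<lambda>w. A w = x \<and> C w = y \<and> D w = z)) w * Y w \<partial>M) = P x y z * m x y" for x y z
  proof -
    have E2: "ev M (\<lambda>w. A w = x \<and> C w = y) \<in> sets M"
      using ev_sets[OF ps mA mC mD, of "\<lambda>x' y' z'. x' = x \<and> y' = y"] by simp
    have k: "P x y z / pr M (\<lambda>w. A w = x \<and> C w = y) \<ge> 0" using Pp[of x y z] pACp[of x y] by simp
    have "(\<integral>w. indicator (ev M (\<lambda>w. A w = x \<and> C w = y \<and> D w = z)) w * Y w \<partial>M)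
       = P x y z / pr M (\<lambda>w. A w = x \<and> C w = y) * (\<integral>w. indicator (ev M (\<lambda>w. A w = x \<and> C w = y)) w * Y w \<partial>M)"
    proof (rule prop_int[OF cell_sets[OF ps mA mC mD] E2 assms(5) k fin])
      fix B :: "real set" assume B: "B \<in> sets borel"
      have "measure M (ev M (\<lambda>w. A w = x \<and> C w = y \<and> D w = z) \<inter> (Y -` B \<inter> space M))
          = pr M (\<lambda>w. A w = x \<and> C w = y \<and> D w = z \<and> Y w \<in> B)"
        unfolding pr_def ev_def by (rule arg_cong[where f="measure M"]) auto
      also have "\<dots> = P x y z / pr M (\<lambda>w. A w = x \<and> C w = y) * pr M (\<lambda>w. Y w \<in> B \<and> A w = x \<and> C w = y)"
        by (rule fac[OF B])
      also have "pr M (\<lambda>w. Y w \<in> B \<and> A w = x \<and> C w = y) = measure M (ev M (\<lambda>w. A w = x \<and> C w = y) \<inter> (Y -` B \<inter> space M))"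
        unfolding pr_def ev_def by (rule arg_cong[where f="measure M"]) auto
      finally show "measure M (ev M (\<lambda>w. A w = x \<and> C w = y \<and> D w = z) \<inter> (Y -` B \<inter> space M))
          = P x y z / pr M (\<lambda>w. A w = x \<and> C w = y) * measure M (ev M (\<lambda>w. A w = x \<and> C w = y) \<inter> (Y -` B \<inter> space M))" .
    qed
    also have "\<dots> = P x y z * m x y" unfolding m_def by simp
    finally show ?thesis .
  qed
  have CE: "cexp M Y (\<lambda>w. q (A w) (C w) (D w)) = cef P m q" for q
    unfolding cexp_def cef_def cp[symmetric] cell_int[OF ps mA mC mD assms(6)] S ..
  have c1: "cexp M Y (\<lambda>w. A w \<and> D w) = cef P m (\<lambda>x y z. x \<and> z)" using CE[of "\<lambda>x y z. x \<and> z"] by simp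
  have c2: "cexp M Y (\<lambda>w. A w \<and> \<not> D w) = cef P m (\<lambda>x y z. x \<and> \<not> z)" using CE[of "\<lambda>x y z. x \<and> \<not> z"] by simp
  have c3: "cexp M Y (\<lambda>w. \<not> A w \<and> D w) = cef P m (\<lambda>x y z. \<not> x \<and> z)" using CE[of "\<lambda>x y z. \<not> x \<and> z"] by simp
  have c4: "cexp M Y (\<lambda>w. \<not> A w \<and> \<not> D w) = cef P m (\<lambda>x y z. \<not> x \<and> \<not> z)" using CE[of "\<lambda>x y z. \<not> x \<and> \<not> z"] by simp
  have c5: "cexp M Y (\<lambda>w. A w \<and> C w) = cef P m (\<lambda>x y z. x \<and> y)" using CE[of "\<lambda>x y z. x \<and> y"] by simp
  have c6: "cexp M Y (\<lambda>w. A w \<and> \<not> C w) = cef P m (\<lambda>x y z. x \<and> \<not> y)" using CE[of "\<lambda>x y z. x \<and> \<not> y"] by simp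
  have c7: "cexp M Y (\<lambda>w. \<not> A w \<and> C w) = cef P m (\<lambda>x y z. \<not> x \<and> y)" using CE[of "\<lambda>x y z. \<not> x \<and> y"] by simp
  have c8: "cexp M Y (\<lambda>w. \<not> A w \<and> \<not> C w) = cef P m (\<lambda>x y z. \<not> x \<and> \<not> y)" using CE[of "\<lambda>x y z. \<not> x \<and> \<not> y"] by simp
  have c9: "cexp M Y A = cef P m (\<lambda>x y z. x)" using CE[of "\<lambda>x y z. x"] by simp
  have c10: "cexp M Y (\<lambda>w. \<not> A w) = cef P m (\<lambda>x y z. \<not> x)" using CE[of "\<lambda>x y z. \<not> x"] by simp
  have p1: "pr M D = pqf P (\<lambda>x y z. z)" using cp[of "\<lambda>x y z. z"] by simp
  have p2: "pr M (\<lambda>w. \<not> D w) = pqf P (\<lambda>x y z. \<not> z)" using cp[of "\<lambda>x y z. \<not> z"] by simp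
  have p3: "pr M C = pqf P (\<lambda>x y z. y)" using cp[of "\<lambda>x y z. y"] by simp
  have p4: "pr M (\<lambda>w. \<not> C w) = pqf P (\<lambda>x y z. \<not> y)" using cp[of "\<lambda>x y z. \<not> y"] by simp
  have Pd': "\<And>x y z. P x y z = (if z then \<delta> else 1-\<delta>)
        * (if y then (if z then \<pi>1 else \<pi>0) else 1 - (if z then \<pi>1 else \<pi>0))
        * (if x then (if y then r1 else r0) else 1 - (if y then r1 else r0))" using Pd by blast
  have mono': "(cef P m (\<lambda>x y z. x \<and> z) \<ge> cef P m (\<lambda>x y z. x \<and> \<not>z) \<and> cef P m (\<lambda>x y z. \<not>x \<and> z) \<ge> cef P m (\<lambda>x y z. \<not>x \<and> \<not>z))
     \<or> (cef P m (\<lambda>x y z. x \<and> z) \<le> cef P m (\<lambda>x y z. x \<and> \<not>z) \<and> cef P m (\<lambda>x y z. \<not>x \<and> z) \<le> cef P m (\<lambda>x y z. \<not>x \<and> \<not>z))"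
    using mono unfolding monotone_in_def nondecr_in_def nonincr_in_def c1 c2 c3 c4 .
  show ?thesis unfolding RD_adj_def RD_crude_def c1 c2 c3 c4 c5 c6 c7 c8 c9 c10 p1 p2 p3 p4
    by (rule alg_main[OF b Pd' mono'])
qed

end
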